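(* Let $G=(V,E)$ be a finite graph in which each edge carries one of the four decorations $(+,o),(+,s),(-,o),(-,s)$. Let $H$ be the $2$-cover of $G$ encoded by the signs, and decorate each edge of $H$ with the letter ($o$ or $s$) of the edge of $G$ it lies over. For $B\subseteq E$ let $\overline{B}$ denote the graph $(V,B)$ in which each edge with a $-$ sign has its letter swapped ($o\leftrightarrow s$) while edges with a $+$ sign keep their letter; for $A\subseteq E$ the graph $(V,A)$ keeps the original letters. Then the numbers of balanced factorientations satisfy $$g(H)=\sum_{A\subseteq E}g(A)\,g\big(\overline{E\setminus A}\big).$$
   Context: The $2$-cover encoded by the signs has vertex set $V\times\{0,1\}$; an edge $uv$ with sign $+$ lifts to the edges $(u,0)(v,0),(u,1)(v,1)$, and an edge with sign $-$ lifts to $(u,0)(v,1),(u,1)(v,0)$. Given a graph $F$ whose edges are each labelled $o$ or $s$, a factorientation consists of orienting every $o$-edge and deciding for every $s$-edge whether it is in a subgraph or not. The mixed degree of a vertex $v$ is the number of $o$-edges oriented towards $v$ plus the number of selected $s$-edges incident to $v$. The factorientation is balanced if every vertex $v$ has mixed degree $d_F(v)/2$, where $d_F(v)$ is the degree of $v$ in $F$. $g(F)$ denotes the number of balanced factorientations of $F$ (with its labels); $g(A)$ means $g$ of the labelled graph $(V,A)$. *)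

theory Defs
  imports Main
begin

text \<open>A labelled (multi)graph is given by a vertex set V, an edge set E of edge
identifiers, an endpoint map ends (each edge e joins fst (ends e) and snd (ends e);
the pair order is only a reference orientation), and a label map lab, where
lab e = True means letter o and lab e = False means letter s.\<close>

definition degree :: "'e set \<Rightarrow> ('e \<Rightarrow> 'v \<times> 'v) \<Rightarrow> 'v \<Rightarrow> nat" where
  "degree E ends v = card {e \<in> E. fst (ends e) = v \<or> snd (ends e) = v}"

text \<open>A factorientation is encoded by a subset X of E: an o-edge e is oriented
towards snd (ends e) if e is in X and towards fst (ends e) otherwise; an s-edge is
selected iff it is in X.\<close>

definition mixed_degree ::
  "'e set \<Rightarrow> ('e \<Rightarrow> 'v \<times> 'v) \<Rightarrow> ('e \<Rightarrow> bool) \<Rightarrow> 'e set \<Rightarrow> 'v \<Rightarrow> nat" where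
  "mixed_degree E ends lab X v =
     card {e \<in> E. lab e \<and> (if e \<in> X then snd (ends e) = v else fst (ends e) = v)}
   + card {e \<in> E. \<not> lab e \<and> e \<in> X \<and> (fst (ends e) = v \<or> snd (ends e) = v)}"

definition balanced_factorientation ::
  "'v set \<Rightarrow> 'e set \<Rightarrow> ('e \<Rightarrow> 'v \<times> 'v) \<Rightarrow> ('e \<Rightarrow> bool) \<Rightarrow> 'e set \<Rightarrow> bool" where
  "balanced_factorientation V E ends lab X \<longleftrightarrow>
     X \<subseteq> E \<and> (\<forall>v\<in>V. 2 * mixed_degree E ends lab X v = degree E ends v)"

definition gcount :: "'v set \<Rightarrow> 'e set \<Rightarrow> ('e \<Rightarrow> 'v \<times> 'v) \<Rightarrow> ('e \<Rightarrow> bool) \<Rightarrow> nat" where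
  "gcount V E ends lab = card {X. balanced_factorientation V E ends lab X}"

text \<open>The 2-cover encoded by the signs (sgnf e = True means +): vertex set V \<times> {0,1}
(with bool for {0,1}), edge set E \<times> {0,1}; the edge (e,b) joins (u,b),(w,b) if e = uw
has sign +, and (u,b),(w, not b) if e has sign -.\<close>
definition cover_ends :: "('e \<Rightarrow> 'v \<times> 'v) \<Rightarrow> ('e \<Rightarrow> bool) \<Rightarrow> 'e \<times> bool \<Rightarrow> ('v \<times> bool) \<times> ('v \<times> bool)" where
  "cover_ends ends sgnf eb =
     (case eb of (e, b) \<Rightarrow> ((fst (ends e), b), (snd (ends e), if sgnf e then b else \<not> b)))"

definition swap_lab :: "('e \<Rightarrow> bool) \<Rightarrow> ('e \<Rightarrow> bool) \<Rightarrow> 'e \<Rightarrow> bool" where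
  "swap_lab sgnf lab e = (if sgnf e then lab e else \<not> lab e)"

end

theory Submission
  imports Defs
begin

definition ct :: "('e \<Rightarrow> 'v \<times> 'v) \<Rightarrow> ('e \<Rightarrow> bool) \<Rightarrow> 'e set \<Rightarrow> 'e \<Rightarrow> 'v \<Rightarrow> nat" where
  "ct ends lab X e v =
     (if lab e \<and> (if e \<in> X then snd (ends e) = v else fst (ends e) = v) then 1 else 0)
   + (if \<not> lab e \<and> e \<in> X \<and> (fst (ends e) = v \<or> snd (ends e) = v) then 1 else 0)"

definition ind :: "('e \<Rightarrow> 'v \<times> 'v) \<Rightarrow> 'e \<Rightarrow> 'v \<Rightarrow> nat" where
  "ind ends e v = (if fst (ends e) = v \<or> snd (ends e) = v then 1 else 0)"

lemma card_filter_sum: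
  "finite E \<Longrightarrow> card {e \<in> E. P e} = (\<Sum>e\<in>E. if P e then 1 else 0)"
  using sum.inter_filter[of E "\<lambda>_. 1::nat" P] by simp

lemma md_sum: "finite E \<Longrightarrow> mixed_degree E ends lab X v = (\<Sum>e\<in>E. ct ends lab X e v)"
  unfolding mixed_degree_def ct_def sum.distrib
  by (simp add: card_filter_sum)

lemma deg_sum: "finite E \<Longrightarrow> degree E ends v = (\<Sum>e\<in>E. ind ends e v)"
  unfolding degree_def ind_def by (simp add: card_filter_sum)

lemma sum_cover:
  "finite E \<Longrightarrow> (\<Sum>p\<in>E \<times> (UNIV::bool set). f p) = (\<Sum>e\<in>E. f (e, False) + f (e, True))"
proof -
  have "(\<Sum>p\<in>E \<times> (UNIV::bool set). f p) = (\<Sum>e\<in>E. \<Sum>b\<in>UNIV. f (e, b))"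
    by (simp add: sum.cartesian_product)
  also have "\<dots> = (\<Sum>e\<in>E. f (e, False) + f (e, True))"
    by (simp add: UNIV_bool)
  finally show ?thesis .
qed

lemma edge_F:
  assumes "fst (ends e) \<noteq> snd (ends e)"
    and "e \<in> X1 \<longleftrightarrow> (e, False) \<in> X" "e \<in> X2 \<longleftrightarrow> (((e, False) \<in> X) = sgnf e)"
  shows "ct (cover_ends ends sgnf) (lab \<circ> fst) X (e, False) (v, False)
       + ct (cover_ends ends sgnf) (lab \<circ> fst) X (e, True) (v, False)
       = (if ((e, False) \<in> X) = ((e, True) \<in> X) then ct ends lab X1 e v
          else ct ends (swap_lab sgnf lab) X2 e v)"
  using assms unfolding ct_def cover_ends_def swap_lab_def
  by (cases "sgnf e"; cases "lab e"; cases "(e, False) \<in> X"; cases "(e, True) \<in> X"; cases "fst (ends e) = v"; cases "snd (ends e) = v"; simp)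

lemma edge_T:
  assumes "fst (ends e) \<noteq> snd (ends e)"
    and "e \<in> X1 \<longleftrightarrow> (e, False) \<in> X" "e \<in> X2 \<longleftrightarrow> (((e, False) \<in> X) = sgnf e)"
  shows "ct (cover_ends ends sgnf) (lab \<circ> fst) X (e, False) (v, True)
       + ct (cover_ends ends sgnf) (lab \<circ> fst) X (e, True) (v, True)
       + (if ((e, False) \<in> X) = ((e, True) \<in> X) then 0 else ct ends (swap_lab sgnf lab) X2 e v)
       = (if ((e, False) \<in> X) = ((e, True) \<in> X) then ct ends lab X1 e v
          else ind ends e v)"
  using assms unfolding ct_def cover_ends_def swap_lab_def ind_def
  by (cases "sgnf e"; cases "lab e"; cases "(e, False) \<in> X"; cases "(e, True) \<in> X"; cases "fst (ends e) = v"; cases "snd (ends e) = v"; simp)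

lemma edge_deg:
  assumes "fst (ends e) \<noteq> snd (ends e)"
  shows "ind (cover_ends ends sgnf) (e, False) (v, c) + ind (cover_ends ends sgnf) (e, True) (v, c)
       = ind ends e v"
  using assms unfolding cover_ends_def ind_def
  by (cases "sgnf e"; cases c; cases "fst (ends e) = v"; cases "snd (ends e) = v"; simp)

lemma ct_cong: "(e \<in> X \<longleftrightarrow> e \<in> Y) \<Longrightarrow> ct ends lab X e v = ct ends lab Y e v"
  unfolding ct_def by simp

lemma vertex_lemma:
  fixes E :: "'e set" and ends :: "'e \<Rightarrow> 'v \<times> 'v" and X :: "('e \<times> bool) set"
  assumes fin: "finite E" and nl: "\<forall>e\<in>E. fst (ends e) \<noteq> snd (ends e)"
    and A_def: "A = {e \<in> E. ((e, False) \<in> X) = ((e, True) \<in> X)}"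
    and X1_def: "X1 = {e \<in> A. (e, False) \<in> X}"
    and X2_def: "X2 = {e \<in> E - A. ((e, False) \<in> X) = sgnf e}"
  shows "mixed_degree (E \<times> UNIV) (cover_ends ends sgnf) (lab \<circ> fst) X (v, False)
          = mixed_degree A ends lab X1 v + mixed_degree (E - A) ends (swap_lab sgnf lab) X2 v"
    and "mixed_degree (E \<times> UNIV) (cover_ends ends sgnf) (lab \<circ> fst) X (v, True)
          + mixed_degree (E - A) ends (swap_lab sgnf lab) X2 v
          = mixed_degree A ends lab X1 v + degree (E - A) ends v"
    and "degree (E \<times> UNIV) (cover_ends ends sgnf) (v, c) = degree A ends v + degree (E - A) ends v"
proof -
  let ?H = "cover_ends ends sgnf" and ?L = "lab \<circ> fst" and ?S = "swap_lab sgnf lab"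
  let ?Y1 = "{e. (e, False) \<in> X}" and ?Y2 = "{e. ((e, False) \<in> X) = sgnf e}"
  have AE: "A \<subseteq> E" using A_def by auto
  have finA: "finite A" using fin AE finite_subset by blast
  have c1: "ct ends lab ?Y1 e v = ct ends lab X1 e v" if "e \<in> A" for e
    by (rule ct_cong) (use that X1_def in auto)
  have c2: "ct ends ?S ?Y2 e v = ct ends ?S X2 e v" if "e \<in> E" "e \<notin> A" for e
    by (rule ct_cong) (use that X2_def in auto)
  have eA: "e \<in> A \<longleftrightarrow> ((e, False) \<in> X) = ((e, True) \<in> X)" if "e \<in> E" for e
    using that A_def by auto
  have split: "(\<Sum>e\<in>E. if e \<in> A then f e else g e) = sum f A + sum g (E - A)" for f g :: "'e \<Rightarrow> nat"
  proof -
    have "E \<inter> {e. e \<in> A} = A" "E \<inter> - {e. e \<in> A} = E - A" using AE by auto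
    then show ?thesis using sum.If_cases[OF fin, of "\<lambda>e. e \<in> A" f g] by simp
  qed
  have "mixed_degree (E \<times> UNIV) ?H ?L X (v, False)
      = (\<Sum>e\<in>E. ct ?H ?L X (e, False) (v, False) + ct ?H ?L X (e, True) (v, False))"
    using fin by (simp add: md_sum sum_cover)
  also have "\<dots> = (\<Sum>e\<in>E. if e \<in> A then ct ends lab X1 e v else ct ends ?S X2 e v)"
  proof (rule sum.cong)
    fix e assume e: "e \<in> E"
    show "ct ?H ?L X (e, False) (v, False) + ct ?H ?L X (e, True) (v, False)
        = (if e \<in> A then ct ends lab X1 e v else ct ends ?S X2 e v)"
      using edge_F[of ends e ?Y1 X ?Y2 sgnf lab v] nl e eA[OF e] c1 c2[OF e] by auto
  qed simp
  also have "\<dots> = mixed_degree A ends lab X1 v + mixed_degree (E - A) ends ?S X2 v"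
    using fin finA by (simp add: split md_sum)
  finally show "mixed_degree (E \<times> UNIV) ?H ?L X (v, False)
      = mixed_degree A ends lab X1 v + mixed_degree (E - A) ends ?S X2 v" .
  have "mixed_degree (E \<times> UNIV) ?H ?L X (v, True) + mixed_degree (E - A) ends ?S X2 v
      = (\<Sum>e\<in>E. ct ?H ?L X (e, False) (v, True) + ct ?H ?L X (e, True) (v, True)
           + (if e \<in> A then 0 else ct ends ?S X2 e v))"
    using fin finA by (simp add: md_sum sum_cover split sum.distrib)
  also have "\<dots> = (\<Sum>e\<in>E. if e \<in> A then ct ends lab X1 e v else ind ends e v)"
  proof (rule sum.cong)
    fix e assume e: "e \<in> E"
    show "ct ?H ?L X (e, False) (v, True) + ct ?H ?L X (e, True) (v, True)
           + (if e \<in> A then 0 else ct ends ?S X2 e v)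
        = (if e \<in> A then ct ends lab X1 e v else ind ends e v)"
      using edge_T[of ends e ?Y1 X ?Y2 sgnf lab v] nl e eA[OF e] c1 c2[OF e] by auto
  qed simp
  also have "\<dots> = mixed_degree A ends lab X1 v + degree (E - A) ends v"
    using fin finA by (simp add: split md_sum deg_sum)
  finally show "mixed_degree (E \<times> UNIV) ?H ?L X (v, True) + mixed_degree (E - A) ends ?S X2 v
      = mixed_degree A ends lab X1 v + degree (E - A) ends v" .
  have "degree (E \<times> UNIV) ?H (v, c) = (\<Sum>e\<in>E. ind ?H (e, False) (v, c) + ind ?H (e, True) (v, c))"
    using fin by (simp add: deg_sum sum_cover)
  also have "\<dots> = (\<Sum>e\<in>E. if e \<in> A then ind ends e v else ind ends e v)"
    by (intro sum.cong refl, simp only: if_cancel, rule edge_deg) (use nl in auto)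
  also have "\<dots> = degree A ends v + degree (E - A) ends v"
    by (simp only: split deg_sum[OF finA] deg_sum[OF finite_Diff[OF fin]])
  finally show "degree (E \<times> UNIV) ?H (v, c) = degree A ends v + degree (E - A) ends v" .
qed

lemma arith_aux:
  fixes h0 h1 a m dA dB d0 d1 :: nat
  shows "h0 = a + m \<Longrightarrow> h1 + m = a + dB \<Longrightarrow> d0 = dA + dB \<Longrightarrow> d1 = dA + dB
    \<Longrightarrow> (2 * h1 = d1 \<and> 2 * h0 = d0) \<longleftrightarrow> (2 * a = dA \<and> 2 * m = dB)"
  by arith

lemma bal_iff:
  fixes E :: "'e set" and ends :: "'e \<Rightarrow> 'v \<times> 'v" and X :: "('e \<times> bool) set"
  assumes fin: "finite E" and nl: "\<forall>e\<in>E. fst (ends e) \<noteq> snd (ends e)"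
    and XE: "X \<subseteq> E \<times> UNIV"
    and A_def: "A = {e \<in> E. ((e, False) \<in> X) = ((e, True) \<in> X)}"
    and X1_def: "X1 = {e \<in> A. (e, False) \<in> X}"
    and X2_def: "X2 = {e \<in> E - A. ((e, False) \<in> X) = sgnf e}"
  shows "balanced_factorientation (V \<times> UNIV) (E \<times> UNIV) (cover_ends ends sgnf) (lab \<circ> fst) X
     \<longleftrightarrow> balanced_factorientation V A ends lab X1
       \<and> balanced_factorientation V (E - A) ends (swap_lab sgnf lab) X2"
proof -
  note VL = vertex_lemma[OF fin nl A_def X1_def X2_def]
  have v: "(\<forall>c. 2 * mixed_degree (E \<times> UNIV) (cover_ends ends sgnf) (lab \<circ> fst) X (v, c)
             = degree (E \<times> UNIV) (cover_ends ends sgnf) (v, c))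
        \<longleftrightarrow> (2 * mixed_degree A ends lab X1 v = degree A ends v
             \<and> 2 * mixed_degree (E - A) ends (swap_lab sgnf lab) X2 v = degree (E - A) ends v)" for v
  proof -
    show ?thesis unfolding all_bool_eq
      by (rule arith_aux[OF VL(1)[where v=v and lab=lab] VL(2)[where v=v and lab=lab]
            VL(3)[where v=v and c=False] VL(3)[where v=v and c=True]])
  qed
  have s1: "X1 \<subseteq> A" "X2 \<subseteq> E - A" using X1_def X2_def by auto
  show ?thesis
    unfolding balanced_factorientation_def using XE s1 v by auto
qed

theorem theorem1p9:
  fixes V :: "'v set" and E :: "'e set" and ends :: "'e \<Rightarrow> 'v \<times> 'v"
    and sgnf :: "'e \<Rightarrow> bool" and lab :: "'e \<Rightarrow> bool"
  assumes "finite V" and "finite E"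
    and "\<forall>e\<in>E. fst (ends e) \<in> V \<and> snd (ends e) \<in> V \<and> fst (ends e) \<noteq> snd (ends e)"
  shows "gcount (V \<times> UNIV) (E \<times> UNIV) (cover_ends ends sgnf) (lab \<circ> fst)
         = (\<Sum>A\<in>Pow E. gcount V A ends lab * gcount V (E - A) ends (swap_lab sgnf lab))"
proof -
  let ?H = "cover_ends ends sgnf" and ?L = "lab \<circ> fst" and ?Sw = "swap_lab sgnf lab"
  let ?S = "{X. balanced_factorientation (V \<times> UNIV) (E \<times> UNIV) ?H ?L X}"
  let ?T = "Sigma (Pow E) (\<lambda>A. {X1. balanced_factorientation V A ends lab X1}
                          \<times> {X2. balanced_factorientation V (E - A) ends ?Sw X2})"
  have fin: "finite E" using assms(2) .
  have nl: "\<forall>e\<in>E. fst (ends e) \<noteq> snd (ends e)" using assms(3) by blast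
  define Af where "Af X = {e \<in> E. ((e, False) \<in> X) = ((e, True) \<in> X)}" for X :: "('e \<times> bool) set"
  define f where "f X = (Af X, {e \<in> Af X. (e, False) \<in> X}, {e \<in> E - Af X. ((e, False) \<in> X) = sgnf e})"
    for X :: "('e \<times> bool) set"
  define g where "g = (\<lambda>(A, X1, X2). {(e, b). e \<in> E \<and> ((e \<in> A \<and> e \<in> X1)
                       \<or> (e \<notin> A \<and> ((e \<in> X2 \<longleftrightarrow> sgnf e) \<longleftrightarrow> \<not> b)))})"
  have gE: "g t \<subseteq> E \<times> UNIV" for t unfolding g_def by (cases t) auto
  have gF: "(e, False) \<in> g (A, X1, X2) \<longleftrightarrow> e \<in> E \<and> ((e \<in> A \<and> e \<in> X1) \<or> (e \<notin> A \<and> (e \<in> X2 \<longleftrightarrow> sgnf e)))"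
    for e A X1 X2 unfolding g_def by simp
  have gT': "(e, True) \<in> g (A, X1, X2) \<longleftrightarrow> e \<in> E \<and> ((e \<in> A \<and> e \<in> X1) \<or> (e \<notin> A \<and> (e \<in> X2 \<longleftrightarrow> \<not> sgnf e)))"
    for e A X1 X2 unfolding g_def by simp
  have fg: "f (g t) = t" if "t \<in> ?T" for t
  proof -
    obtain A X1 X2 where t: "t = (A, X1, X2)" by (cases t) auto
    have sub: "A \<subseteq> E" "X1 \<subseteq> A" "X2 \<subseteq> E - A"
      using that unfolding t balanced_factorientation_def by auto
    have "Af (g t) = A" unfolding Af_def t using sub by (auto simp: gF gT')
    moreover have "{e \<in> A. (e, False) \<in> g t} = X1" unfolding t using sub by (auto simp: gF gT')
    moreover have "{e \<in> E - A. ((e, False) \<in> g t) = sgnf e} = X2" unfolding t using sub by (auto simp: gF gT')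
    ultimately show ?thesis unfolding f_def t by simp
  qed
  have gf: "g (f X) = X" if "X \<in> ?S" for X
  proof -
    have XE: "X \<subseteq> E \<times> UNIV" using that unfolding balanced_factorientation_def by auto
    show ?thesis
    proof (rule set_eqI)
      fix p :: "'e \<times> bool"
      obtain e b where p: "p = (e, b)" by (cases p) auto
      have eE: "(e, c) \<in> X \<Longrightarrow> e \<in> E" for c using XE by auto
      show "p \<in> g (f X) \<longleftrightarrow> p \<in> X"
        unfolding p f_def Af_def
        by (cases b; cases "(e, False) \<in> X"; cases "(e, True) \<in> X"; cases "e \<in> E"; simp add: gF gT' eE)
    qed
  qed
  have fS: "f X \<in> ?T" if "X \<in> ?S" for X
  proof -
    have XE: "X \<subseteq> E \<times> UNIV" using that unfolding balanced_factorientation_def by auto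
    have "balanced_factorientation V (Af X) ends lab {e \<in> Af X. (e, False) \<in> X}
       \<and> balanced_factorientation V (E - Af X) ends ?Sw {e \<in> E - Af X. ((e, False) \<in> X) = sgnf e}"
      using bal_iff[OF fin nl XE Af_def refl refl] that by simp
    moreover have "Af X \<in> Pow E" unfolding Af_def by auto
    ultimately show ?thesis unfolding f_def by simp
  qed
  have gT: "g t \<in> ?S" if "t \<in> ?T" for t
  proof -
    obtain A X1 X2 where t: "t = (A, X1, X2)" by (cases t) auto
    have fgt: "f (g t) = (A, X1, X2)" using fg[OF that] t by simp
    have "Af (g t) = A" "{e \<in> Af (g t). (e, False) \<in> g t} = X1"
      "{e \<in> E - Af (g t). ((e, False) \<in> g t) = sgnf e} = X2"
      using fgt unfolding f_def by auto
    then have "balanced_factorientation (V \<times> UNIV) (E \<times> UNIV) ?H ?L (g t)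
       \<longleftrightarrow> balanced_factorientation V A ends lab X1 \<and> balanced_factorientation V (E - A) ends ?Sw X2"
      using bal_iff[OF fin nl gE[of t] Af_def refl refl, of V sgnf lab] by simp
    then show ?thesis using that t by simp
  qed
  have bij: "bij_betw f ?S ?T"
  proof (rule bij_betw_byWitness[where f'=g])
    show "\<forall>a\<in>?S. g (f a) = a" using gf by blast
    show "\<forall>a\<in>?T. f (g a) = a" using fg by blast
    show "f ` ?S \<subseteq> ?T" using fS by blast
    show "g ` ?T \<subseteq> ?S" using gT by blast
  qed
  have finB: "finite {X. balanced_factorientation V B ends l X}" if "B \<subseteq> E" for B l
  proof -
    have "{X. balanced_factorientation V B ends l X} \<subseteq> Pow B"
      unfolding balanced_factorientation_def by auto
    moreover have "finite B" using that fin finite_subset by blast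
    ultimately show ?thesis using finite_subset by blast
  qed
  have "gcount (V \<times> UNIV) (E \<times> UNIV) ?H ?L = card ?S" unfolding gcount_def ..
  also have "\<dots> = card ?T" using bij by (rule bij_betw_same_card)
  also have "\<dots> = (\<Sum>A\<in>Pow E. card ({X1. balanced_factorientation V A ends lab X1}
                          \<times> {X2. balanced_factorientation V (E - A) ends ?Sw X2}))"
    by (rule card_SigmaI) (use fin finB in auto)
  also have "\<dots> = (\<Sum>A\<in>Pow E. gcount V A ends lab * gcount V (E - A) ends ?Sw)"
    unfolding gcount_def card_cartesian_product ..
  finally show ?thesis .
qed

end
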